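(* Let $a>0$ and $f\in\mathcal C_a$. Then $\mathrm{Sh}_0(f):\mathbb R\to\mathbb R$ satisfies: $\mathrm{Sh}_0(f)(x)=f(x)$ for all $x\le-a$; $\mathrm{Sh}_0(f)(2x+f(x))=f(x)$ for all $x\in(-a,0)$; and $\mathrm{Sh}_0(f)(x)=x$ for all $x\ge f(0)$.
   Context: $\mathcal C_a$ is the set of $C^1$ functions $f:\mathbb R\to\mathbb R$ that are even, satisfy $f(s)=|s|$ for $|s|\ge a$ and are strictly convex on $[-a,a]$. For $f\in\mathcal C_a$ and $\alpha\in[0,1)$: $F_\alpha(s)=f(s)-\alpha s$, $x_\alpha^+=(f')^{-1}(\alpha)\in[0,a)$ (inverse of $f':[-a,a]\to[-1,1]$); let $F_\alpha^{-1}$ be the inverse of $F_\alpha|_{[x_\alpha^+,\infty)}$, $\phi=F_\alpha^{-1}\circ F_\alpha$, $\delta_x=(1-\alpha)^{-1}F_\alpha(x)-\phi(x)$, $s_\alpha=x_\alpha^++\delta_{x_\alpha^+}$; $x\mapsto x+\delta_x$ is an increasing bijection $(-\infty,x_\alpha^+]\to(-\infty,s_\alpha]$ with inverse $\tau$. Define $\mathrm{Sh}_\alpha(f)(x)=\alpha x+F_\alpha(\tau(x))$ for $x\le s_\alpha$ and $=x$ for $x>s_\alpha$. *)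

theory Defs
  imports "HOL-Analysis.Analysis"
begin

definition strictly_convex_on :: "real set \<Rightarrow> (real \<Rightarrow> real) \<Rightarrow> bool" where
  "strictly_convex_on S f \<longleftrightarrow>
     (\<forall>x\<in>S. \<forall>y\<in>S. \<forall>t. x \<noteq> y \<and> 0 < t \<and> t < 1 \<longrightarrow>
        f (t * x + (1 - t) * y) < t * f x + (1 - t) * f y)"

definition Ca :: "real \<Rightarrow> (real \<Rightarrow> real) set" where
  "Ca a = {f. f C1_differentiable_on UNIV \<and> (\<forall>s. f (- s) = f s)
             \<and> (\<forall>s. \<bar>s\<bar> \<ge> a \<longrightarrow> f s = \<bar>s\<bar>)
             \<and> strictly_convex_on {-a..a} f}"

definition Fal :: "real \<Rightarrow> (real \<Rightarrow> real) \<Rightarrow> real \<Rightarrow> real" where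
  "Fal \<alpha> f s = f s - \<alpha> * s"

definition xplus :: "real \<Rightarrow> real \<Rightarrow> (real \<Rightarrow> real) \<Rightarrow> real" where
  "xplus a \<alpha> f = (THE x. x \<in> {-a..a} \<and> deriv f x = \<alpha>)"

definition Finv :: "real \<Rightarrow> real \<Rightarrow> (real \<Rightarrow> real) \<Rightarrow> real \<Rightarrow> real" where
  "Finv a \<alpha> f y = (THE s. s \<ge> xplus a \<alpha> f \<and> Fal \<alpha> f s = y)"

definition phi :: "real \<Rightarrow> real \<Rightarrow> (real \<Rightarrow> real) \<Rightarrow> real \<Rightarrow> real" where
  "phi a \<alpha> f x = Finv a \<alpha> f (Fal \<alpha> f x)"

definition delta :: "real \<Rightarrow> real \<Rightarrow> (real \<Rightarrow> real) \<Rightarrow> real \<Rightarrow> real" where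
  "delta a \<alpha> f x = Fal \<alpha> f x / (1 - \<alpha>) - phi a \<alpha> f x"

definition salpha :: "real \<Rightarrow> real \<Rightarrow> (real \<Rightarrow> real) \<Rightarrow> real" where
  "salpha a \<alpha> f = xplus a \<alpha> f + delta a \<alpha> f (xplus a \<alpha> f)"

definition tau :: "real \<Rightarrow> real \<Rightarrow> (real \<Rightarrow> real) \<Rightarrow> real \<Rightarrow> real" where
  "tau a \<alpha> f y = (THE x. x \<le> xplus a \<alpha> f \<and> x + delta a \<alpha> f x = y)"

definition Sh :: "real \<Rightarrow> real \<Rightarrow> (real \<Rightarrow> real) \<Rightarrow> real \<Rightarrow> real" where
  "Sh a \<alpha> f x = (if x \<le> salpha a \<alpha> f then \<alpha> * x + Fal \<alpha> f (tau a \<alpha> f x) else x)"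

end

theory Submission
  imports Defs
begin

theorem corollary3p19:
  fixes a :: real and f :: "real \<Rightarrow> real"
  assumes "a > 0" and "f \<in> Ca a"
  shows "(\<forall>x. x \<le> -a \<longrightarrow> Sh a 0 f x = f x)
       \<and> (\<forall>x. -a < x \<and> x < 0 \<longrightarrow> Sh a 0 f (2 * x + f x) = f x)
       \<and> (\<forall>x. x \<ge> f 0 \<longrightarrow> Sh a 0 f x = x)"
proof -
  have a0: "a > 0" by fact
  have C1: "f C1_differentiable_on UNIV" and ev: "\<And>s. f (- s) = f s"
    and ab: "\<And>s. \<bar>s\<bar> \<ge> a \<Longrightarrow> f s = \<bar>s\<bar>"
    and sc0: "strictly_convex_on {-a..a} f"
    using assms(2) unfolding Ca_def by auto
  have sc: "f (t * x + (1 - t) * y) < t * f x + (1 - t) * f y"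
    if "-a \<le> x" "x \<le> a" "-a \<le> y" "y \<le> a" "x \<noteq> y" "0 < t" "t < 1" for x y t
    using sc0 that unfolding strictly_convex_on_def by auto
  have der: "DERIV f x :> deriv f x" for x
    using C1 unfolding C1_differentiable_on_eq
    by (simp add: DERIV_deriv_iff_real_differentiable)
  have derneg: "deriv f (- x) = - deriv f x" for x
  proof -
    have "DERIV (\<lambda>s. f (- s)) (- x) :> deriv f (-(-x)) * (-1)"
      by (rule DERIV_chain2[of f "deriv f (-(-x))" uminus "-x" "-1" UNIV])
        (auto intro!: derivative_eq_intros der)
    then have "DERIV f (- x) :> - deriv f x" using ev by simp
    then show ?thesis using der DERIV_unique by blast
  qed
  have fa: "f (-a) = a" "f a = a" using ab a0 by auto
  have d1: "deriv f (-a) = -1"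
  proof -
    define D where "D = deriv f (-a)"
    have k: "DERIV (\<lambda>s. f s + s) (-a) :> D + 1"
      unfolding D_def by (auto intro!: derivative_eq_intros der)
    have kz: "f (-a - h) + (-a - h) = 0" if "h > 0" for h
      using ab[of "-a-h"] that a0 by auto
    have kz0: "f (-a) + (-a) = 0" using fa by simp
    have "\<not> D + 1 > 0"
    proof
      assume "D + 1 > 0"
      from DERIV_pos_inc_left[OF k this] obtain d where "d > 0"
        "\<forall>h>0. h < d \<longrightarrow> f (-a - h) + (-a - h) < f (-a) + (-a)" by blast
      then show False using kz[of "d/2"] kz0 by (auto dest: spec[of _ "d/2"])
    qed
    moreover have "\<not> D + 1 < 0"
    proof
      assume "D + 1 < 0"
      from DERIV_neg_dec_left[OF k this] obtain d where "d > 0"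
        "\<forall>h>0. h < d \<longrightarrow> f (-a) + (-a) < f (-a - h) + (-a - h)" by blast
      then show False using kz[of "d/2"] kz0 by (auto dest: spec[of _ "d/2"])
    qed
    ultimately show ?thesis unfolding D_def by linarith
  qed
  have ge1: "f y \<ge> - y" if "-a \<le> y" "y \<le> a" for y
  proof (rule ccontr)
    assume neg: "\<not> f y \<ge> - y"
    have ya: "y > -a" using neg fa that by (cases "y = -a") auto
    define c where "c = (f y + y) / (y + a)"
    have c0: "c < 0" unfolding c_def using neg ya by (simp add: divide_neg_pos)
    have q: "DERIV (\<lambda>s. f s + s - c * (s + a)) (-a) :> -1 + 1 - c * 1"
      using d1 by (auto intro!: derivative_eq_intros der[of "-a", simplified d1])
    from DERIV_pos_inc_right[OF q] c0 obtain d where d: "d > 0"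
      "\<forall>h>0. h < d \<longrightarrow> f (-a) + (-a) - c * (-a + a) < f (-a + h) + (-a + h) - c * (-a + h + a)"
      by auto
    define h where "h = min (d/2) ((y+a)/2)"
    have h: "h > 0" "h < d" "h < y + a" using d ya unfolding h_def by (auto simp: min_def)
    define t where "t = h / (y + a)"
    have t: "0 < t" "t < 1" using h ya unfolding t_def by auto
    have ht: "h = t * (y + a)" unfolding t_def using ya by simp
    have s: "-a + h = t * y + (1 - t) * (-a)" unfolding ht by algebra
    have "f (-a + h) < t * f y + (1 - t) * f (-a)"
      unfolding s using sc[of y "-a" t] that t ya by auto
    moreover have "c * h = t * (f y + y)" unfolding ht c_def using ya by simp
    moreover have "f (-a) + (-a) - c * (-a + a) < f (-a + h) + (-a + h) - c * h"
      using d h by auto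
    ultimately show False using fa ht by (simp add: algebra_simps)
  qed
  have geabs: "f y \<ge> \<bar>y\<bar>" for y
  proof (cases "\<bar>y\<bar> \<ge> a")
    case True then show ?thesis using ab by simp
  next
    case False
    then have "f y \<ge> -y" "f (-y) \<ge> y" using ge1[of y] ge1[of "-y"] by auto
    then show ?thesis using ev[of y] by auto
  qed
  have mono1: "f x < f y" if "0 \<le> x" "x < y" "y \<le> a" for x y
  proof -
    define t where "t = (y - x) / (2 * y)"
    have t: "0 < t" "t < 1" using that unfolding t_def by auto
    have "x = t * (-y) + (1 - t) * y" unfolding t_def using that by (simp add: field_simps)
    then have "f x < t * f (-y) + (1 - t) * f y"
      using sc[of "-y" y t] that t by auto
    then show ?thesis using ev[of y] by (simp add: algebra_simps)
  qed
  have mono: "f x < f y" if "0 \<le> x" "x < y" for x y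
  proof (cases "y \<le> a")
    case True then show ?thesis using mono1 that by auto
  next
    case False
    then have fy: "f y = y" using ab[of y] that by auto
    show ?thesis
    proof (cases "x \<ge> a")
      case True then show ?thesis using ab[of x] fy that by auto
    next
      case False
      then show ?thesis using mono1[of x a] fa fy that \<open>\<not> y \<le> a\<close> by auto
    qed
  qed
  have gmono: "2 * x + f x < 2 * y + f y" if "x < y" "y \<le> 0" for x y
  proof (cases "y \<le> -a")
    case True then show ?thesis using ab[of x] ab[of y] that by auto
  next
    case ya: False
    show ?thesis
    proof (cases "x \<le> -a")
      case True then show ?thesis using ab[of x] geabs[of y] that ya by auto
    next
      case xa: False
      define t where "t = (y - x) / (y + a)"
      have t: "0 < t" "t < 1" using that xa ya unfolding t_def by auto
      have "t * (y + a) = y - x" unfolding t_def using ya by simp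
      then have "x = t * (-a) + (1 - t) * y" by (simp add: algebra_simps)
      then have fx: "f x < t * f (-a) + (1 - t) * f y"
        using sc[of "-a" y t] that t a0 ya by auto
      have fy: "f y \<ge> - y" using ge1[of y] that ya a0 by auto
      have "y - x = t * (y + a)" unfolding t_def using ya by simp
      moreover have "t * (a - f y) \<le> t * (2 * (y + a))"
        using fy t ya by (intro mult_left_mono) auto
      ultimately show ?thesis using fx fa by (simp add: algebra_simps)
    qed
  qed
  have ginj: "x = y" if "x \<le> 0" "y \<le> 0" "2 * x + f x = 2 * y + f y" for x y
    using gmono[of x y] gmono[of y x] that by (cases x y rule: linorder_cases) auto
  have dz: "deriv f 0 = 0" using derneg[of 0] by simp
  have dpos: "deriv f x \<noteq> 0" if "0 < x" "x \<le> a" for x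
  proof
    assume dx: "deriv f x = 0"
    define m where "m = (f x - f 0) / x"
    have m0: "m > 0" unfolding m_def using mono[of 0 x] that by simp
    have q: "DERIV (\<lambda>s. f s - m * s) x :> 0 - m * 1"
      using dx by (auto intro!: derivative_eq_intros der[of x, simplified dx])
    from DERIV_neg_dec_left[OF q] m0 obtain d where d: "d > 0"
      "\<forall>h>0. h < d \<longrightarrow> f x - m * x < f (x - h) - m * (x - h)" by auto
    define h where "h = min (d/2) (x/2)"
    have h: "h > 0" "h < d" "h < x" using d that unfolding h_def by (auto simp: min_def)
    define t where "t = h / x"
    have t: "0 < t" "t < 1" using h that unfolding t_def by auto
    have ht: "h = t * x" unfolding t_def using that by simp
    have s: "x - h = t * 0 + (1 - t) * x" unfolding ht by algebra
    have "f (x - h) < t * f 0 + (1 - t) * f x"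
      unfolding s using sc[of 0 x t] that t a0 by auto
    moreover have "m * x = f x - f 0" unfolding m_def using that by simp
    moreover have "m * h = t * (f x - f 0)" unfolding ht m_def using that by simp
    moreover have "f x - m * x < f (x - h) - m * (x - h)" using d h by auto
    ultimately show False by (simp add: algebra_simps)
  qed
  have dnz: "deriv f x \<noteq> 0" if "x \<in> {-a..a}" "x \<noteq> 0" for x
  proof (cases "x > 0")
    case True then show ?thesis using dpos that by auto
  next
    case False
    then show ?thesis using dpos[of "-x"] derneg[of x] that by auto
  qed
  have xp: "xplus a 0 f = 0"
    unfolding xplus_def
    by (rule the_equality) (use dz dnz a0 in auto)
  have Fal0: "Fal 0 f = f" by (auto simp: Fal_def)
  have ph: "phi a 0 f x = \<bar>x\<bar>" for x
    unfolding phi_def Finv_def xp Fal0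
  proof (rule the_equality)
    show "0 \<le> \<bar>x\<bar> \<and> f \<bar>x\<bar> = f x" using ev[of x] by (cases "x \<ge> 0") auto
    fix s assume "0 \<le> s \<and> f s = f x"
    then have "0 \<le> s" "f s = f \<bar>x\<bar>" using ev[of x] by (cases "x \<ge> 0", auto)+
    then show "s = \<bar>x\<bar>" using mono[of s "\<bar>x\<bar>"] mono[of "\<bar>x\<bar>" s]
      by (cases s "\<bar>x\<bar>" rule: linorder_cases) auto
  qed
  have dl: "delta a 0 f x = f x - \<bar>x\<bar>" for x
    unfolding delta_def ph Fal0 by simp
  have sa: "salpha a 0 f = f 0" unfolding salpha_def xp dl by simp
  have ta: "tau a 0 f (2 * x + f x) = x" if "x \<le> 0" for x
    unfolding tau_def xp dl
  proof (rule the_equality)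
    show "x \<le> 0 \<and> x + (f x - \<bar>x\<bar>) = 2 * x + f x" using that by auto
    fix y assume "y \<le> 0 \<and> y + (f y - \<bar>y\<bar>) = 2 * x + f x"
    then have "y \<le> 0" "2 * y + f y = 2 * x + f x" by auto
    then show "y = x" using ginj that by auto
  qed
  have Shd: "Sh a 0 f y = (if y \<le> f 0 then f (tau a 0 f y) else y)" for y
    unfolding Sh_def sa Fal0 by simp
  have f00: "f 0 \<ge> 0" using geabs[of 0] by simp
  show ?thesis
  proof (intro conjI allI impI)
    fix x :: real assume x: "x \<le> -a"
    then have "f x = -x" using ab[of x] a0 by auto
    then have e: "2 * x + f x = x" by simp
    have xle: "x \<le> 0" using x a0 by simp
    have "tau a 0 f x = x" using ta[OF xle] unfolding e .
    then show "Sh a 0 f x = f x" using Shd x a0 f00 by auto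
  next
    fix x :: real assume x: "-a < x \<and> x < 0"
    then have "2 * x + f x < 2 * 0 + f 0" using gmono[of x 0] by auto
    then show "Sh a 0 f (2 * x + f x) = f x" using Shd ta[of x] x by auto
  next
    fix x :: real assume x: "x \<ge> f 0"
    show "Sh a 0 f x = x"
    proof (cases "x = f 0")
      case True
      then have "tau a 0 f x = 0" using ta[of 0] by simp
      then show ?thesis using Shd True by simp
    next
      case False then show ?thesis using Shd x by auto
    qed
  qed
qed

end
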